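(* Consider an instance of the min-cost chain-constrained spanning tree problem (defined in the context) for which the LP $(P_1)$ is feasible, and let $\lambda>1$. The following algorithm returns a spanning tree $T$ of $G$ with $c(T)\le\frac{\lambda}{\lambda-1}\cdot\mathrm{OPT}$ and $|\delta_T(S)|\le 9\lambda b_S$ for all $S\in\mathcal{S}$: (1) compute an optimal solution $x^*$ to $(P_\lambda)$ and a laminar decomposition $\mathcal{L}$ of $x^*$; (2) compute a fractional spanning tree $x'$ and laminar family $\mathcal{L}'$ such that $(x',\mathcal{L}')$ is a rainbow-free decomposition, $\mathrm{supp}(x')\subseteq\mathrm{supp}(x^* )$, $\mathcal{L}\subseteq\mathcal{L}'$, and $x'(\delta(S))\le x^*(\delta(S))$ for all $S\in\mathcal{S}$; (3) apply the Olver–Zenklusen rounding algorithm to $(x',\mathcal{L}')$, which returns for every $L\in\mathcal{L}'$ a spanning tree $T_L\subseteq\mathrm{supp}(x')$ of $G^{\mathcal{L}'}_L$ such that the concatenation $T$ of the $T_L$ is a spanning tree of $G$ with $|\delta_T(S)|\le 9x'(\delta(S))$ for all $S\in\mathcal{S}$; return $T$.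
   Context: Min-cost chain-constrained spanning tree: given an undirected connected graph $G=(V,E)$, costs $c_e\ge0$, a chain $\mathcal{S}$ of node sets $S_1\subsetneq\dots\subsetneq S_\ell\subsetneq V$ and integers $b_S$ ($S\in\mathcal{S}$), find a min-cost spanning tree $T$ with $|\delta_T(S)|\le b_S$ for all $S\in\mathcal{S}$, where $\delta_T(S)=T\cap\delta(S)$. Notation: $E(S)$ = edges with both ends in $S$, $\delta(S)$ = edges with exactly one end in $S$, $z(F)=\sum_{e\in F}z_e$, $\mathrm{supp}(z)=\{e:z_e>0\}$, $c(T)=\sum_{e\in T}c_e$. For $\lambda\ge1$, $(P_\lambda)$ is the LP: minimize $\sum_e c_ex_e$ subject to $x(E(S))\le|S|-1$ for all $\emptyset\ne S\subsetneq V$, $x(E)=|V|-1$, $x(\delta(S))\le\lambda b_S$ for all $S\in\mathcal{S}$, $x\ge0$. $\mathrm{OPT}(\lambda)$ is its optimal value and $\mathrm{OPT}=\mathrm{OPT}(1)$. Points satisfying the first two constraint families and $x\ge 0$ are fractional spanning trees. A laminar decomposition of a fractional spanning tree $x$ is an inclusion-wise maximal laminar family of nonempty sets $A\subseteq V$ with $x(E(A))=|A|-1$. For a laminar family $\mathcal{L}$ and $L\in\mathcal{L}$, $G^{\mathcal{L}}_L$ is the graph obtained from $(L,E(L))$ by contracting the maximal members of $\mathcal{L}$ strictly contained in $L$. With $\mathcal{S}_e=\{S\in\mathcal{S}:e\in\delta(S)\}$, edges $e,f$ form a rainbow if $\mathcal{S}_e\subseteq\mathcal{S}_f$ or $\mathcal{S}_f\subseteq\mathcal{S}_e$;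 $(x,\mathcal{L})$ is rainbow-free if $\mathcal{L}$ is a laminar decomposition of $x$ and for every $L\in\mathcal{L}$ no two edges of $\mathrm{supp}(x)\cap E(G^{\mathcal{L}}_L)$ form a rainbow. *)

theory Defs
  imports Complex_Main
begin

text \<open>Undirected (multi)graphs: a vertex set V, an edge set E, and an endpoint map
  en assigning to each edge its two-element set of ends.\<close>

definition Ein :: "('e \<Rightarrow> 'a set) \<Rightarrow> 'e set \<Rightarrow> 'a set \<Rightarrow> 'e set" where
  "Ein en E S = {e \<in> E. en e \<subseteq> S}"

definition dlt :: "('e \<Rightarrow> 'a set) \<Rightarrow> 'e set \<Rightarrow> 'a set \<Rightarrow> 'e set" where
  "dlt en E S = {e \<in> E. card (en e \<inter> S) = 1}"

definition adj :: "('e \<Rightarrow> 'a set) \<Rightarrow> 'e set \<Rightarrow> ('a \<times> 'a) set" where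
  "adj en T = {(u, v). \<exists>e \<in> T. en e = {u, v}}"

definition connected_graph :: "'a set \<Rightarrow> ('e \<Rightarrow> 'a set) \<Rightarrow> 'e set \<Rightarrow> bool" where
  "connected_graph W en T \<longleftrightarrow> (\<forall>u \<in> W. \<forall>v \<in> W. (u, v) \<in> (adj en T)\<^sup>*)"

definition is_spanning_tree :: "'a set \<Rightarrow> 'e set \<Rightarrow> ('e \<Rightarrow> 'a set) \<Rightarrow> 'e set \<Rightarrow> bool" where
  "is_spanning_tree W F en T \<longleftrightarrow>
     T \<subseteq> F \<and> (\<forall>e \<in> T. card (en e) = 2 \<and> en e \<subseteq> W) \<and>
     connected_graph W en T \<and>
     (\<forall>e \<in> T. \<forall>u v. en e = {u, v} \<longrightarrow> (u, v) \<notin> (adj en (T - {e}))\<^sup>*)"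

definition frac_st :: "'a set \<Rightarrow> 'e set \<Rightarrow> ('e \<Rightarrow> 'a set) \<Rightarrow> ('e \<Rightarrow> real) \<Rightarrow> bool" where
  "frac_st V E en x \<longleftrightarrow>
     (\<forall>e \<in> E. 0 \<le> x e) \<and>
     (\<forall>S. S \<noteq> {} \<and> S \<subset> V \<longrightarrow> sum x (Ein en E S) \<le> real (card S) - 1) \<and>
     sum x E = real (card V) - 1"

definition P_feasible :: "'a set \<Rightarrow> 'e set \<Rightarrow> ('e \<Rightarrow> 'a set) \<Rightarrow> 'a set set \<Rightarrow> ('a set \<Rightarrow> int)
    \<Rightarrow> real \<Rightarrow> ('e \<Rightarrow> real) \<Rightarrow> bool" where
  "P_feasible V E en \<S> b lam x \<longleftrightarrow>
     frac_st V E en x \<and> (\<forall>S \<in> \<S>. sum x (dlt en E S) \<le> lam * real_of_int (b S))"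

definition lp_cost :: "('e \<Rightarrow> real) \<Rightarrow> 'e set \<Rightarrow> ('e \<Rightarrow> real) \<Rightarrow> real" where
  "lp_cost c E x = (\<Sum>e\<in>E. c e * x e)"

definition P_optimal :: "'a set \<Rightarrow> 'e set \<Rightarrow> ('e \<Rightarrow> 'a set) \<Rightarrow> 'a set set \<Rightarrow> ('a set \<Rightarrow> int)
    \<Rightarrow> ('e \<Rightarrow> real) \<Rightarrow> real \<Rightarrow> ('e \<Rightarrow> real) \<Rightarrow> bool" where
  "P_optimal V E en \<S> b c lam x \<longleftrightarrow>
     P_feasible V E en \<S> b lam x \<and>
     (\<forall>y. P_feasible V E en \<S> b lam y \<longrightarrow> lp_cost c E x \<le> lp_cost c E y)"

definition OPT_lp :: "'a set \<Rightarrow> 'e set \<Rightarrow> ('e \<Rightarrow> 'a set) \<Rightarrow> 'a set set \<Rightarrow> ('a set \<Rightarrow> int)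
    \<Rightarrow> ('e \<Rightarrow> real) \<Rightarrow> real \<Rightarrow> real" where
  "OPT_lp V E en \<S> b c lam = Inf (lp_cost c E ` {x. P_feasible V E en \<S> b lam x})"

definition laminar :: "'a set set \<Rightarrow> bool" where
  "laminar \<L> \<longleftrightarrow> (\<forall>A \<in> \<L>. \<forall>B \<in> \<L>. A \<subseteq> B \<or> B \<subseteq> A \<or> A \<inter> B = {})"

definition tight_sets :: "'a set \<Rightarrow> 'e set \<Rightarrow> ('e \<Rightarrow> 'a set) \<Rightarrow> ('e \<Rightarrow> real) \<Rightarrow> 'a set set" where
  "tight_sets V E en x = {A. A \<noteq> {} \<and> A \<subseteq> V \<and> sum x (Ein en E A) = real (card A) - 1}"

definition laminar_decomp :: "'a set \<Rightarrow> 'e set \<Rightarrow> ('e \<Rightarrow> 'a set) \<Rightarrow> ('e \<Rightarrow> real) \<Rightarrow> 'a set set \<Rightarrow> bool" where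
  "laminar_decomp V E en x \<L> \<longleftrightarrow>
     \<L> \<subseteq> tight_sets V E en x \<and> laminar \<L> \<and>
     (\<forall>\<M>. \<L> \<subseteq> \<M> \<and> \<M> \<subseteq> tight_sets V E en x \<and> laminar \<M> \<longrightarrow> \<M> = \<L>)"

text \<open>Contracted graph G^L_L: maximal members of L strictly inside L are contracted.\<close>
definition children :: "'a set set \<Rightarrow> 'a set \<Rightarrow> 'a set set" where
  "children \<L> L = {A \<in> \<L>. A \<subset> L \<and> \<not> (\<exists>B \<in> \<L>. A \<subset> B \<and> B \<subset> L)}"

definition blk :: "'a set set \<Rightarrow> 'a set \<Rightarrow> 'a \<Rightarrow> 'a set" where
  "blk \<L> L v = (if \<exists>A \<in> children \<L> L. v \<in> A then (THE A. A \<in> children \<L> L \<and> v \<in> A) else {v})"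

definition contr_verts :: "'a set set \<Rightarrow> 'a set \<Rightarrow> 'a set set" where
  "contr_verts \<L> L = blk \<L> L ` L"

text \<open>Edges of G^L_L: edges of E(L) that do not become loops.\<close>
definition contr_edges :: "'e set \<Rightarrow> ('e \<Rightarrow> 'a set) \<Rightarrow> 'a set set \<Rightarrow> 'a set \<Rightarrow> 'e set" where
  "contr_edges E en \<L> L = {e \<in> Ein en E L. \<not> (\<exists>A \<in> children \<L> L. en e \<subseteq> A)}"

definition contr_ends :: "'a set set \<Rightarrow> 'a set \<Rightarrow> ('e \<Rightarrow> 'a set) \<Rightarrow> 'e \<Rightarrow> 'a set set" where
  "contr_ends \<L> L en e = blk \<L> L ` en e"

definition supp :: "'e set \<Rightarrow> ('e \<Rightarrow> real) \<Rightarrow> 'e set" where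
  "supp E x = {e \<in> E. x e > 0}"

definition Sets_of :: "'e set \<Rightarrow> ('e \<Rightarrow> 'a set) \<Rightarrow> 'a set set \<Rightarrow> 'e \<Rightarrow> 'a set set" where
  "Sets_of E en \<S> e = {S \<in> \<S>. e \<in> dlt en E S}"

definition rainbow :: "'e set \<Rightarrow> ('e \<Rightarrow> 'a set) \<Rightarrow> 'a set set \<Rightarrow> 'e \<Rightarrow> 'e \<Rightarrow> bool" where
  "rainbow E en \<S> e f \<longleftrightarrow> Sets_of E en \<S> e \<subseteq> Sets_of E en \<S> f \<or> Sets_of E en \<S> f \<subseteq> Sets_of E en \<S> e"

definition rainbow_free :: "'a set \<Rightarrow> 'e set \<Rightarrow> ('e \<Rightarrow> 'a set) \<Rightarrow> 'a set set \<Rightarrow> ('e \<Rightarrow> real)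
    \<Rightarrow> 'a set set \<Rightarrow> bool" where
  "rainbow_free V E en \<S> x \<L> \<longleftrightarrow>
     laminar_decomp V E en x \<L> \<and>
     (\<forall>L \<in> \<L>. \<forall>e \<in> supp E x \<inter> contr_edges E en \<L> L. \<forall>f \<in> supp E x \<inter> contr_edges E en \<L> L.
        e \<noteq> f \<longrightarrow> \<not> rainbow E en \<S> e f)"

end

theory Submission
  imports Defs
begin


definition comps :: "'a set \<Rightarrow> ('e \<Rightarrow> 'a set) \<Rightarrow> 'e set \<Rightarrow> 'a set set" where
  "comps W en F = (\<lambda>v. (adj en F)\<^sup>* `` {v}) ` W"

lemma adj_sym: "(u, v) \<in> adj en F \<Longrightarrow> (v, u) \<in> adj en F"
  unfolding adj_def by (auto simp: insert_commute)

lemma R_sym: "(u, v) \<in> (adj en F)\<^sup>* \<Longrightarrow> (v, u) \<in> (adj en F)\<^sup>*"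
proof -
  have "sym (adj en F)" by (auto intro: symI adj_sym)
  hence "sym ((adj en F)\<^sup>*)" by (rule sym_rtrancl)
  thus "(u, v) \<in> (adj en F)\<^sup>* \<Longrightarrow> (v, u) \<in> (adj en F)\<^sup>*" by (auto dest: symD)
qed

lemma adj_mono: "F \<subseteq> G \<Longrightarrow> adj en F \<subseteq> adj en G"
  unfolding adj_def by auto

lemma R_mono': "F \<subseteq> G \<Longrightarrow> (adj en F)\<^sup>* \<subseteq> (adj en G)\<^sup>*"
  by (rule rtrancl_mono[OF adj_mono])

lemma R_mono: "F \<subseteq> G \<Longrightarrow> (u, v) \<in> (adj en F)\<^sup>* \<Longrightarrow> (u, v) \<in> (adj en G)\<^sup>*"
  using R_mono' by blast

lemma adj_insert: "en e = {a, b} \<Longrightarrow> adj en (insert e F) = adj en F \<union> {(a, b), (b, a)}"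
  unfolding adj_def by (auto simp: doubleton_eq_iff)

lemma R_insert:
  assumes e: "en e = {a, b}"
  shows "(u, v) \<in> (adj en (insert e F))\<^sup>* \<longleftrightarrow>
     (u, v) \<in> (adj en F)\<^sup>* \<or> ((u, a) \<in> (adj en F)\<^sup>* \<and> (b, v) \<in> (adj en F)\<^sup>*)
       \<or> ((u, b) \<in> (adj en F)\<^sup>* \<and> (a, v) \<in> (adj en F)\<^sup>*)"
    (is "?L \<longleftrightarrow> ?P v")
proof
  let ?R = "(adj en F)\<^sup>*"
  assume "?L"
  hence "(u, v) \<in> (adj en F \<union> {(a, b), (b, a)})\<^sup>*" using adj_insert[of en e a b, OF e] by simp
  thus "?P v"
  proof (induction rule: rtrancl_induct)
    case base thus ?case by simp
  next
    case (step y z)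
    from step.hyps(2) show ?case
    proof
      assume "(y, z) \<in> adj en F"
      hence yz: "(y, z) \<in> ?R" by blast
      from step.IH show ?case using rtrancl_trans[OF _ yz] by blast
    next
      assume "(y, z) \<in> {(a, b), (b, a)}"
      thus ?case using step.IH by (auto intro: R_sym)
    qed
  qed
next
  let ?R = "(adj en F)\<^sup>*"
  let ?R' = "(adj en (insert e F))\<^sup>*"
  have sub: "?R \<subseteq> ?R'" by (rule R_mono') auto
  have ab: "(a, b) \<in> ?R'" "(b, a) \<in> ?R'" using adj_insert[of en e a b, OF e] by auto
  assume "?P v"
  thus "?L" using sub ab by (meson rtrancl_trans subsetD)
qed

lemma reach_in:
  assumes "\<forall>e\<in>F. en e \<subseteq> W" "(u, v) \<in> (adj en F)\<^sup>*" "u \<in> W"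
  shows "v \<in> W"
  using assms(2,3)
proof (induction rule: rtrancl_induct)
  case base thus ?case .
next
  case (step y z)
  then obtain e where "e \<in> F" "en e = {y, z}" unfolding adj_def by auto
  thus ?case using assms(1) by auto
qed

lemma comps_empty: "finite W \<Longrightarrow> card (comps W en {}) = card W"
proof -
  assume "finite W"
  have "adj en {} = {}" unfolding adj_def by auto
  hence "comps W en {} = (\<lambda>v. {v}) ` W" unfolding comps_def by auto
  moreover have "inj_on (\<lambda>v. {v}) W" by (auto intro: inj_onI)
  ultimately show ?thesis by (simp add: card_image)
qed

lemma comps_insert_conn:
  assumes e: "en e = {a, b}" and ab: "(a, b) \<in> (adj en F)\<^sup>*"
  shows "comps W en (insert e F) = comps W en F"
proof -
  have "(adj en (insert e F))\<^sup>* = (adj en F)\<^sup>*"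
    using R_insert[where en=en and e=e and a=a and b=b, OF e] ab R_sym[OF ab] by (auto intro: rtrancl_trans)
  thus ?thesis unfolding comps_def by simp
qed

lemma comps_insert_new:
  assumes fin: "finite W" and e: "en e = {a, b}" and aW: "a \<in> W" and bW: "b \<in> W"
    and nab: "(a, b) \<notin> (adj en F)\<^sup>*"
  shows "card (comps W en (insert e F)) + 1 = card (comps W en F)"
proof -
  let ?R = "(adj en F)\<^sup>*"
  let ?R' = "(adj en (insert e F))\<^sup>*"
  define C where "C v = ?R `` {v}" for v
  define Ca where "Ca = C a"
  define Cb where "Cb = C b"
  define X where "X = C ` (W - (Ca \<union> Cb))"
  have symR: "\<And>u v. (u, v) \<in> ?R \<Longrightarrow> (v, u) \<in> ?R" by (rule R_sym)
  have eqc: "\<And>u v. (u, v) \<in> ?R \<Longrightarrow> C u = C v"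
    unfolding C_def by (auto intro: rtrancl_trans symR)
  have C'1: "?R' `` {v} = Ca \<union> Cb" if "v \<in> Ca \<union> Cb" for v
  proof -
    have tr: "\<And>p q r. (p,q) \<in> ?R \<Longrightarrow> (q,r) \<in> ?R \<Longrightarrow> (p,r) \<in> ?R" by (rule rtrancl_trans)
    from that have av: "(a, v) \<in> ?R \<or> (b, v) \<in> ?R" unfolding Ca_def Cb_def C_def by auto
    show ?thesis
    proof (rule set_eqI)
      fix u
      have "u \<in> ?R' `` {v} \<longleftrightarrow> (v, u) \<in> ?R' " by simp
      also have "\<dots> \<longleftrightarrow> (v, u) \<in> ?R \<or> ((v, a) \<in> ?R \<and> (b, u) \<in> ?R) \<or> ((v, b) \<in> ?R \<and> (a, u) \<in> ?R)"
        by (rule R_insert[where en=en and e=e and a=a and b=b, OF e])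
      also have "\<dots> \<longleftrightarrow> (a, u) \<in> ?R \<or> (b, u) \<in> ?R"
        using av nab tr symR by blast
      also have "\<dots> \<longleftrightarrow> u \<in> Ca \<union> Cb" unfolding Ca_def Cb_def C_def by simp
      finally show "u \<in> ?R' `` {v} \<longleftrightarrow> u \<in> Ca \<union> Cb" .
    qed
  qed
  have C'2: "?R' `` {v} = C v" if "v \<notin> Ca \<union> Cb" for v
  proof -
    from that have "(a, v) \<notin> ?R" "(b, v) \<notin> ?R" unfolding Ca_def Cb_def C_def by auto
    hence "(v, a) \<notin> ?R" "(v, b) \<notin> ?R" using symR by blast+
    thus ?thesis unfolding C_def using R_insert[where en=en and e=e and a=a and b=b, OF e, of v] by auto
  qed
  have aCa: "a \<in> Ca" and bCb: "b \<in> Cb" unfolding Ca_def Cb_def C_def by auto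
  have vC: "v \<in> C v" for v unfolding C_def by auto
  have "comps W en (insert e F) = insert (Ca \<union> Cb) X"
  proof -
    have "comps W en (insert e F) = (\<lambda>v. ?R' `` {v}) ` ((W \<inter> (Ca \<union> Cb)) \<union> (W - (Ca \<union> Cb)))"
      unfolding comps_def by (metis Int_Diff_Un)
    also have "\<dots> = insert (Ca \<union> Cb) X"
    proof -
      have "W \<inter> (Ca \<union> Cb) \<noteq> {}" using aW aCa by auto
      hence "(\<lambda>v. ?R' `` {v}) ` (W \<inter> (Ca \<union> Cb)) = {Ca \<union> Cb}" using C'1 by auto
      moreover have "(\<lambda>v. ?R' `` {v}) ` (W - (Ca \<union> Cb)) = X" unfolding X_def using C'2 by auto
      ultimately show ?thesis by (simp add: image_Un)
    qed
    finally show ?thesis .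
  qed
  moreover have "comps W en F = insert Ca (insert Cb X)"
  proof -
    have c1: "comps W en F = C ` (W \<inter> (Ca \<union> Cb)) \<union> C ` (W - (Ca \<union> Cb))"
      unfolding comps_def C_def by (metis Int_Diff_Un image_Un)
    have c2: "C ` (W \<inter> (Ca \<union> Cb)) = {Ca, Cb}"
    proof
      show "C ` (W \<inter> (Ca \<union> Cb)) \<subseteq> {Ca, Cb}"
      proof
        fix Z assume "Z \<in> C ` (W \<inter> (Ca \<union> Cb))"
        then obtain v where v: "v \<in> Ca \<union> Cb" "Z = C v" by auto
        hence "(a, v) \<in> ?R \<or> (b, v) \<in> ?R" unfolding Ca_def Cb_def C_def by auto
        thus "Z \<in> {Ca, Cb}" using eqc v(2) unfolding Ca_def Cb_def by auto
      qed
      show "{Ca, Cb} \<subseteq> C ` (W \<inter> (Ca \<union> Cb))" using aW bW aCa bCb Ca_def Cb_def by auto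
    qed
    show ?thesis using c1 c2 unfolding X_def by auto
  qed
  moreover have "Ca \<notin> X" "Cb \<notin> X" "Ca \<union> Cb \<notin> X" "Ca \<noteq> Cb"
  proof -
    have *: "Z \<in> X \<Longrightarrow> Z \<inter> (Ca \<union> Cb) = {}" for Z
    proof -
      assume "Z \<in> X"
      then obtain v where v: "v \<notin> Ca \<union> Cb" "Z = C v" unfolding X_def by auto
      show ?thesis
      proof (rule ccontr)
        assume "Z \<inter> (Ca \<union> Cb) \<noteq> {}"
        then obtain w where "w \<in> C v" "w \<in> Ca \<union> Cb" using v by auto
        hence "(v, w) \<in> ?R" "(a, w) \<in> ?R \<or> (b, w) \<in> ?R" unfolding C_def Ca_def Cb_def by auto
        hence "(a, v) \<in> ?R \<or> (b, v) \<in> ?R" by (auto intro: rtrancl_trans symR)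
        thus False using v(1) unfolding Ca_def Cb_def C_def by auto
      qed
    qed
    show "Ca \<notin> X" using * aCa by blast
    show "Cb \<notin> X" using * bCb by blast
    show "Ca \<union> Cb \<notin> X" using * aCa by blast
    show "Ca \<noteq> Cb" using bCb nab unfolding Ca_def C_def by auto
  qed
  moreover have "finite X" unfolding X_def using fin by auto
  ultimately show ?thesis by simp
qed

definition edges_in :: "'a set \<Rightarrow> ('e \<Rightarrow> 'a set) \<Rightarrow> 'e set \<Rightarrow> bool" where
  "edges_in W en F \<longleftrightarrow> (\<forall>e\<in>F. card (en e) = 2 \<and> en e \<subseteq> W)"

lemma edge_ends: "card (A::'a set) = 2 \<Longrightarrow> \<exists>a b. A = {a, b} \<and> a \<noteq> b"
  by (simp add: card_2_iff)

lemma N1: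
  assumes "finite F" "finite W" "edges_in W en F"
  shows "card W \<le> card F + card (comps W en F)"
  using assms
proof (induction F rule: finite_induct)
  case empty thus ?case using comps_empty[of W en] by simp
next
  case (insert e F)
  have "edges_in W en F" using insert.prems unfolding edges_in_def by auto
  hence ih: "card W \<le> card F + card (comps W en F)" using insert.IH insert.prems by blast
  from insert.prems have ce: "card (en e) = 2" "en e \<subseteq> W" unfolding edges_in_def by auto
  from edge_ends[OF ce(1)] obtain a b where "en e = {a, b}" by blast
  with ce(2) have e: "en e = {a, b}" "a \<in> W" "b \<in> W" by auto
  show ?case
  proof (cases "(a, b) \<in> (adj en F)\<^sup>*")
    case True thus ?thesis using comps_insert_conn[where en=en and e=e and F=F and W=W, OF e(1) True] ih insert.hyps by simp
  next
    case False thus ?thesis using comps_insert_new[where en=en and e=e and F=F, OF \<open>finite W\<close> e False] ih insert.hyps by simp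
  qed
qed

definition bridges :: "('e \<Rightarrow> 'a set) \<Rightarrow> 'e set \<Rightarrow> bool" where
  "bridges en F \<longleftrightarrow> (\<forall>e \<in> F. \<forall>u v. en e = {u, v} \<longrightarrow> (u, v) \<notin> (adj en (F - {e}))\<^sup>*)"

lemma bridges_mono: "bridges en G \<Longrightarrow> F \<subseteq> G \<Longrightarrow> bridges en F"
  unfolding bridges_def using R_mono'[where en=en] by (meson Diff_mono order_refl subsetD)

lemma N2:
  assumes "finite F" "finite W" "edges_in W en F" "bridges en F"
  shows "card W = card F + card (comps W en F)"
  using assms
proof (induction F rule: finite_induct)
  case empty thus ?case using comps_empty[of W en] by simp
next
  case (insert e F)
  have "edges_in W en F" using insert.prems unfolding edges_in_def by auto
  moreover have "bridges en F" using bridges_mono[of en "insert e F" F] insert.prems by blast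
  ultimately have ih: "card W = card F + card (comps W en F)" using insert.IH insert.prems by blast
  from insert.prems have ce: "card (en e) = 2" "en e \<subseteq> W" unfolding edges_in_def by auto
  from edge_ends[OF ce(1)] obtain a b where "en e = {a, b}" by blast
  with ce(2) have e: "en e = {a, b}" "a \<in> W" "b \<in> W" by auto
  have "(a, b) \<notin> (adj en F)\<^sup>*"
    using insert.prems(3) e(1) insert.hyps(2) unfolding bridges_def by auto
  thus ?case using comps_insert_new[where en=en and e=e and F=F, OF \<open>finite W\<close> e] ih insert.hyps by simp
qed

lemma comps_conn:
  assumes "W \<noteq> {}" "edges_in W en F" "\<forall>u\<in>W. \<forall>v\<in>W. (u, v) \<in> (adj en F)\<^sup>*"
  shows "comps W en F = {W}"
proof -
  have "(adj en F)\<^sup>* `` {v} = W" if "v \<in> W" for v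
    using that assms(2,3) reach_in[of F en W v] unfolding edges_in_def by auto
  thus ?thesis using assms(1) unfolding comps_def by auto
qed

lemma comps_ge1: "finite W \<Longrightarrow> W \<noteq> {} \<Longrightarrow> card (comps W en F) \<ge> 1"
  unfolding comps_def by (simp add: Suc_le_eq card_gt_0_iff)

lemma conn_card:
  assumes "finite F" "finite W" "edges_in W en F" "W \<noteq> {}"
    "\<forall>u\<in>W. \<forall>v\<in>W. (u, v) \<in> (adj en F)\<^sup>*"
  shows "card W \<le> card F + 1"
  using N1[OF assms(1-3)] comps_conn[OF assms(4,3,5)] by simp

lemma forest_card:
  assumes "finite F" "finite W" "edges_in W en F" "W \<noteq> {}" "bridges en F"
  shows "card F + 1 \<le> card W"
  using N2[OF assms(1-3,5)] comps_ge1[OF assms(2,4), of en F] by simp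



lemma children_uniq:
  assumes "laminar LL" "A \<in> children LL L" "B \<in> children LL L" "v \<in> A" "v \<in> B"
  shows "A = B"
proof -
  have AB: "A \<in> LL" "B \<in> LL" "A \<subset> L" "B \<subset> L" using assms(2,3) unfolding children_def by auto
  have "A \<subseteq> B \<or> B \<subseteq> A \<or> A \<inter> B = {}" using assms(1) AB(1,2) unfolding laminar_def by auto
  hence "A \<subseteq> B \<or> B \<subseteq> A" using assms(4,5) by auto
  moreover have "\<not> A \<subset> B" using assms(2) AB(2,4) unfolding children_def by auto
  moreover have "\<not> B \<subset> A" using assms(3) AB(1,3) unfolding children_def by auto
  ultimately show ?thesis by (metis psubsetI)
qed
lemma blk_child: "laminar LL \<Longrightarrow> A \<in> children LL L \<Longrightarrow> v \<in> A \<Longrightarrow> blk LL L v = A"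
proof -
  assume a: "laminar LL" "A \<in> children LL L" "v \<in> A"
  have "(THE B. B \<in> children LL L \<and> v \<in> B) = A"
  proof (rule the_equality)
    show "A \<in> children LL L \<and> v \<in> A" using a by simp
    fix B assume "B \<in> children LL L \<and> v \<in> B"
    thus "B = A" using children_uniq[OF a(1) _ a(2) _ a(3)] by simp
  qed
  thus ?thesis unfolding blk_def using a by auto
qed

lemma blk_single: "\<not> (\<exists>A\<in>children LL L. v \<in> A) \<Longrightarrow> blk LL L v = {v}"
  unfolding blk_def by auto

lemma contr_conn:
  assumes finV: "finite V" and lamL: "laminar LL" and LLsub: "\<forall>A\<in>LL. A \<subseteq> V"
    and TL: "\<forall>L\<in>LL. TL L \<subseteq> contr_edges E en LL L \<and>
               connected_graph (contr_verts LL L) (contr_ends LL L en) (TL L)"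
    and TLT: "\<forall>L\<in>LL. TL L \<subseteq> T" and edgesE: "\<forall>e\<in>E. card (en e) = 2"
  shows "L \<in> LL \<Longrightarrow> \<forall>u\<in>L. \<forall>v\<in>L. (u, v) \<in> (adj en (T \<inter> Ein en E L))\<^sup>*"
proof (induction "card L" arbitrary: L rule: less_induct)
  case less
  define Rl where "Rl = (adj en (T \<inter> Ein en E L))\<^sup>*"
  define Bk where "Bk = blk LL L"
  have trR: "\<And>a b c. (a,b)\<in>Rl \<Longrightarrow> (b,c)\<in>Rl \<Longrightarrow> (a,c)\<in>Rl" unfolding Rl_def by (rule rtrancl_trans)
  have finL: "finite L" using less.prems LLsub finV finite_subset by blast
  have blk_prop: "v \<in> Bk v \<and> Bk v \<subseteq> L \<and> (\<forall>p\<in>Bk v. \<forall>q\<in>Bk v. (p, q) \<in> Rl)" if "v \<in> L" for v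
  proof (cases "\<exists>A\<in>children LL L. v \<in> A")
    case True
    then obtain A where A: "A \<in> children LL L" "v \<in> A" by blast
    hence Bv: "Bk v = A" unfolding Bk_def using blk_child[OF lamL] by blast
    have AL: "A \<in> LL" "A \<subset> L" using A(1) unfolding children_def by auto
    have "card A < card L" using AL(2) finL by (simp add: psubset_card_mono)
    hence ihA: "\<forall>u\<in>A. \<forall>w\<in>A. (u, w) \<in> (adj en (T \<inter> Ein en E A))\<^sup>*" using less.hyps[of A] AL(1) by simp
    have "T \<inter> Ein en E A \<subseteq> T \<inter> Ein en E L" using AL(2) unfolding Ein_def by auto
    hence "(adj en (T \<inter> Ein en E A))\<^sup>* \<subseteq> Rl" unfolding Rl_def by (rule R_mono')
    hence "\<forall>u\<in>A. \<forall>w\<in>A. (u, w) \<in> Rl" using ihA by blast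
    thus ?thesis using Bv A AL by auto
  next
    case False
    hence "Bk v = {v}" unfolding Bk_def by (rule blk_single)
    thus ?thesis using that unfolding Rl_def by auto
  qed
  have TLsub: "TL L \<subseteq> T \<inter> Ein en E L" using TL TLT less.prems unfolding contr_edges_def by blast
  have lift: "\<forall>u\<in>B1. \<forall>v\<in>B2. (u, v) \<in> Rl"
    if "(B1, B2) \<in> (adj (contr_ends LL L en) (TL L))\<^sup>*" "B1 \<in> Bk ` L" for B1 B2
    using that(1)
  proof (induction rule: rtrancl_induct)
    case base thus ?case using that(2) blk_prop by blast
  next
    case (step B2 B3)
    from step.hyps(2) obtain e where e: "e \<in> TL L" "contr_ends LL L en e = {B2, B3}"
      unfolding adj_def by auto
    have eT: "e \<in> T \<inter> Ein en E L" using e(1) TLsub by blast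
    have "card (en e) = 2" using eT edgesE unfolding Ein_def by auto
    then obtain p q where pq: "en e = {p, q}" using edge_ends by blast
    have pqL: "p \<in> L" "q \<in> L" using eT pq unfolding Ein_def by auto
    have ce: "{Bk p, Bk q} = {B2, B3}" using e(2) pq unfolding contr_ends_def Bk_def by simp
    have pqR: "(p, q) \<in> Rl" "(q, p) \<in> Rl" using eT pq unfolding Rl_def adj_def
      by (auto intro!: r_into_rtrancl simp: insert_commute)
    show ?case
    proof (intro ballI)
      fix u v assume u: "u \<in> B1" and v: "v \<in> B3"
      from ce have "(Bk p = B2 \<and> Bk q = B3) \<or> (Bk q = B2 \<and> Bk p = B3)" by (auto simp: doubleton_eq_iff)
      thus "(u, v) \<in> Rl"
      proof
        assume h: "Bk p = B2 \<and> Bk q = B3"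
        have "(u, p) \<in> Rl" using step.IH u h blk_prop[OF pqL(1)] by blast
        moreover have "(q, v) \<in> Rl" using v h blk_prop[OF pqL(2)] by blast
        ultimately show ?thesis using pqR trR by blast
      next
        assume h: "Bk q = B2 \<and> Bk p = B3"
        have "(u, q) \<in> Rl" using step.IH u h blk_prop[OF pqL(2)] by blast
        moreover have "(p, v) \<in> Rl" using v h blk_prop[OF pqL(1)] by blast
        ultimately show ?thesis using pqR trR by blast
      qed
    qed
  qed
  show ?case
  proof (intro ballI)
    fix u v assume u: "u \<in> L" and v: "v \<in> L"
    have "(Bk u, Bk v) \<in> (adj (contr_ends LL L en) (TL L))\<^sup>*"
      using TL less.prems u v unfolding connected_graph_def contr_verts_def Bk_def by blast
    hence "\<forall>p\<in>Bk u. \<forall>q\<in>Bk v. (p, q) \<in> Rl" using lift u by blast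
    thus "(u, v) \<in> (adj en (T \<inter> Ein en E L))\<^sup>*" using blk_prop u v unfolding Rl_def by blast
  qed
qed



definition crs :: "'a set \<Rightarrow> 'a set \<Rightarrow> bool" where
  "crs A B \<longleftrightarrow> A \<inter> B \<noteq> {} \<and> \<not> A \<subseteq> B \<and> \<not> B \<subseteq> A"

lemma cross_dec_I:
  assumes lam: "laminar LL" and L0: "L0 \<in> LL" and c: "crs S L0"
  shows "{L\<in>LL. crs (S \<inter> L0) L} \<subseteq> {L\<in>LL. crs S L} - {L0}"
proof
  fix L assume "L \<in> {L\<in>LL. crs (S \<inter> L0) L}"
  hence L: "L \<in> LL" "crs (S \<inter> L0) L" by auto
  have "L \<subseteq> L0 \<or> L0 \<subseteq> L \<or> L \<inter> L0 = {}" using lam L(1) L0 unfolding laminar_def by blast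
  moreover have "\<not> L0 \<subseteq> L" using L(2) unfolding crs_def by blast
  moreover have "L \<inter> L0 \<noteq> {}" using L(2) unfolding crs_def by blast
  ultimately have "L \<subseteq> L0" by blast
  hence "crs S L" using L(2) unfolding crs_def by blast
  moreover have "L \<noteq> L0" using L(2) unfolding crs_def by blast
  ultimately show "L \<in> {L\<in>LL. crs S L} - {L0}" using L(1) by blast
qed

lemma cross_dec_U:
  assumes lam: "laminar LL" and L0: "L0 \<in> LL" and c: "crs S L0"
  shows "{L\<in>LL. crs (S \<union> L0) L} \<subseteq> {L\<in>LL. crs S L} - {L0}"
proof
  fix L assume "L \<in> {L\<in>LL. crs (S \<union> L0) L}"
  hence L: "L \<in> LL" "crs (S \<union> L0) L" by auto
  have "L \<subseteq> L0 \<or> L0 \<subseteq> L \<or> L \<inter> L0 = {}" using lam L(1) L0 unfolding laminar_def by blast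
  moreover have "\<not> L \<subseteq> L0" using L(2) unfolding crs_def by blast
  ultimately have "L0 \<subseteq> L \<or> L \<inter> L0 = {}" by blast
  hence "crs S L" using L(2) c unfolding crs_def by blast
  moreover have "L \<noteq> L0" using L(2) unfolding crs_def by blast
  ultimately show "L \<in> {L\<in>LL. crs S L} - {L0}" using L(1) by blast
qed

lemma Ein_V: "\<forall>e\<in>E. en e \<subseteq> V \<Longrightarrow> Ein en E V = E"
  unfolding Ein_def by auto

lemma uncross:
  fixes x :: "'e \<Rightarrow> real"
  assumes finV: "finite V" and finE: "finite E"
   and edges: "\<forall>e\<in>E. card (en e) = 2 \<and> en e \<subseteq> V"
   and fst: "frac_st V E en x"
   and ld: "laminar_decomp V E en x LL"
   and Tsupp: "\<forall>e\<in>T. x e > 0"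
   and forest: "\<forall>A. A \<noteq> {} \<longrightarrow> A \<subseteq> V \<longrightarrow> card (T \<inter> Ein en E A) + 1 \<le> card A"
   and base: "\<forall>L\<in>LL. card L \<le> card (T \<inter> Ein en E L) + 1"
  shows "S \<in> tight_sets V E en x \<Longrightarrow> card S \<le> card (T \<inter> Ein en E S) + 1"
proof (induction "card {L\<in>LL. crs S L}" arbitrary: S rule: less_induct)
  case less
  have lam: "laminar LL" and LLt: "LL \<subseteq> tight_sets V E en x"
    and maxi: "\<And>M. LL \<subseteq> M \<Longrightarrow> M \<subseteq> tight_sets V E en x \<Longrightarrow> laminar M \<Longrightarrow> M = LL"
    using ld unfolding laminar_decomp_def by auto
  have finLL: "finite LL"
  proof -
    have "LL \<subseteq> Pow V" using LLt unfolding tight_sets_def by auto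
    thus ?thesis using finV finite_subset by blast
  qed
  have xnn: "\<forall>e\<in>E. 0 \<le> x e" using fst unfolding frac_st_def by auto
  have ub: "sum x (Ein en E A) \<le> real (card A) - 1" if "A \<noteq> {}" "A \<subseteq> V" for A
  proof (cases "A = V")
    case True thus ?thesis using Ein_V[of E en V] edges fst unfolding frac_st_def by auto
  next
    case False thus ?thesis using that fst unfolding frac_st_def by auto
  qed
  have finEin: "finite (Ein en E A)" for A using finE unfolding Ein_def by auto
  have S: "S \<noteq> {}" "S \<subseteq> V" "sum x (Ein en E S) = real (card S) - 1"
    using less.prems unfolding tight_sets_def by auto
  show ?case
  proof (cases "\<exists>L0\<in>LL. crs S L0")
    case False
    have "laminar (insert S LL)"
      using lam False unfolding laminar_def crs_def by blast
    hence "insert S LL = LL" using maxi[of "insert S LL"] LLt less.prems by blast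
    hence "S \<in> LL" by blast
    thus ?thesis using base by blast
  next
    case True
    then obtain L0 where L0: "L0 \<in> LL" "crs S L0" by blast
    have L0t: "L0 \<noteq> {}" "L0 \<subseteq> V" "sum x (Ein en E L0) = real (card L0) - 1"
      using L0(1) LLt unfolding tight_sets_def by auto
    define I where "I = S \<inter> L0"
    define U where "U = S \<union> L0"
    have IU: "I \<noteq> {}" "I \<subseteq> V" "U \<noteq> {}" "U \<subseteq> V"
      using L0(2) S L0t unfolding I_def U_def crs_def by auto
    have finS: "finite S" "finite L0" using S(2) L0t(2) finV finite_subset by auto
    have cardIU: "card U + card I = card S + card L0"
      unfolding U_def I_def using card_Un_Int[OF finS] by simp
    have EI: "Ein en E I = Ein en E S \<inter> Ein en E L0" unfolding Ein_def I_def by auto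
    have ESU: "Ein en E S \<union> Ein en E L0 \<subseteq> Ein en E U" unfolding Ein_def U_def by auto
    define X where "X = Ein en E U - (Ein en E S \<union> Ein en E L0)"
    have sumU: "sum x (Ein en E U) = sum x (Ein en E S \<union> Ein en E L0) + sum x X"
      unfolding X_def using sum.subset_diff[OF ESU finEin, of x] by linarith
    have sumSL: "sum x (Ein en E S \<union> Ein en E L0) = sum x (Ein en E S) + sum x (Ein en E L0) - sum x (Ein en E I)"
      unfolding EI using sum_Un[OF finEin finEin, of x] by simp
    have XE: "X \<subseteq> E" unfolding X_def Ein_def by auto
    have finX: "finite X" using XE finE finite_subset by blast
    have Xnn: "sum x X \<ge> 0" using XE xnn by (intro sum_nonneg) auto
    have ubU: "sum x (Ein en E U) \<le> real (card U) - 1" using ub IU by auto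
    have ubI: "sum x (Ein en E I) \<le> real (card I) - 1" using ub IU by auto
    have rc: "real (card U) + real (card I) = real (card S) + real (card L0)" using cardIU
      by (metis of_nat_add)
    have X0: "sum x X = 0" using sumU sumSL ubU ubI rc S(3) L0t(3) Xnn by linarith
    have tI: "sum x (Ein en E I) = real (card I) - 1" using sumU sumSL ubU ubI rc S(3) L0t(3) Xnn by linarith
    have tU: "sum x (Ein en E U) = real (card U) - 1" using sumU sumSL ubU ubI rc S(3) L0t(3) Xnn by linarith
    have "\<forall>e\<in>X. x e = 0" using X0 sum_nonneg_eq_0_iff[OF finX, of x] XE xnn by auto
    hence TX: "T \<inter> X = {}" using Tsupp by force
    have TU: "T \<inter> Ein en E U = (T \<inter> Ein en E S) \<union> (T \<inter> Ein en E L0)"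
      using TX ESU unfolding X_def by blast
    have TI: "T \<inter> Ein en E I = (T \<inter> Ein en E S) \<inter> (T \<inter> Ein en E L0)"
      unfolding EI by blast
    have cT: "card (T \<inter> Ein en E U) + card (T \<inter> Ein en E I) = card (T \<inter> Ein en E S) + card (T \<inter> Ein en E L0)"
      unfolding TU TI by (rule card_Un_Int[symmetric]) (use finEin in auto)
    have Itight: "I \<in> tight_sets V E en x" using IU tI unfolding tight_sets_def by auto
    have Utight: "U \<in> tight_sets V E en x" using IU tU unfolding tight_sets_def by auto
    have finC: "finite {L\<in>LL. crs S L}" using finLL by auto
    have L0in: "L0 \<in> {L\<in>LL. crs S L}" using L0 by auto
    have lessI: "card {L\<in>LL. crs I L} < card {L\<in>LL. crs S L}"
      unfolding I_def by (rule psubset_card_mono[OF finC]) (use cross_dec_I[OF lam L0] L0in in blast)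
    have lessU: "card {L\<in>LL. crs U L} < card {L\<in>LL. crs S L}"
      unfolding U_def by (rule psubset_card_mono[OF finC]) (use cross_dec_U[OF lam L0] L0in in blast)
    have ihI: "card I \<le> card (T \<inter> Ein en E I) + 1" using less.hyps[OF lessI Itight] .
    have ihU: "card U \<le> card (T \<inter> Ein en E U) + 1" using less.hyps[OF lessU Utight] .
    have fL0: "card (T \<inter> Ein en E L0) + 1 \<le> card L0" using forest L0t by blast
    show ?thesis using ihI ihU fL0 cT cardIU by linarith
  qed
qed



lemma ev_lin:
  fixes g0 B D :: real
  assumes "g0 \<le> B" "g0 = B \<Longrightarrow> D \<le> 0"
  shows "\<forall>\<^sub>F a in at_right 0. g0 + a * D \<le> B"
proof (cases "g0 = B")
  case True
  hence "D \<le> 0" using assms by auto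
  have "\<forall>\<^sub>F a in at_right (0::real). 0 < a" by (rule eventually_at_right_less)
  thus ?thesis
    by (rule eventually_mono) (use True \<open>D \<le> 0\<close> in \<open>simp add: mult_nonneg_nonpos\<close>)
next
  case False
  hence lt: "g0 < B" using assms by auto
  have "((\<lambda>a. g0 + a * D) \<longlongrightarrow> g0 + 0 * D) (at_right (0::real))"
    by (intro tendsto_intros)
  hence "((\<lambda>a. g0 + a * D) \<longlongrightarrow> g0) (at_right (0::real))" by simp
  from order_tendstoD(2)[OF this lt] show ?thesis by (rule eventually_mono) simp
qed

lemma sum_chi: "finite F \<Longrightarrow> (\<Sum>e\<in>F. (if e \<in> T then 1 else 0 :: real)) = real (card (F \<inter> T))"
  by (simp add: sum.If_cases Int_def)

lemma lp_main:
  fixes x y :: "'e \<Rightarrow> real"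
  assumes finV: "finite V" and finE: "finite E"
    and edges: "\<forall>e\<in>E. card (en e) = 2 \<and> en e \<subseteq> V"
    and opt: "P_optimal V E en SS b c lam x"
    and y: "P_feasible V E en SS b 1 y"
    and lam: "lam > 1"
    and cost: "\<forall>e\<in>E. 0 \<le> c e"
    and finSS: "finite SS"
    and TE: "T \<subseteq> E"
    and Tsupp: "\<forall>e\<in>T. x e > 0"
    and cardT: "real (card T) = real (card V) - 1"
    and tightT: "\<forall>A. A \<in> tight_sets V E en x \<longrightarrow> real (card A) - 1 \<le> real (card (T \<inter> Ein en E A))"
  shows "sum c T \<le> lam / (lam - 1) * lp_cost c E y"
proof (rule ccontr)
  assume contra: "\<not> ?thesis"
  define k where "k = lam / (lam - 1)"
  have k1: "k > 1" unfolding k_def using lam by (simp add: field_simps)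
  have kl: "k * (lam - 1) = lam" unfolding k_def using lam by (simp add: field_simps)
  define d where "d e = x e - (if e \<in> T then 1 else 0) + k * (y e - x e)" for e
  define p where "p a = (\<lambda>e. x e + a * d e)" for a :: real
  have sum_p: "sum (p a) F = sum x F + a * sum d F" for a F
    unfolding p_def by (simp add: sum.distrib sum_distrib_left)
  have sum_d: "sum d F = sum x F - real (card (F \<inter> T)) + k * (sum y F - sum x F)" if "finite F" for F
    unfolding d_def using sum_chi[OF that, of T]
    by (simp add: sum.distrib sum_subtractf sum_distrib_left[symmetric] algebra_simps)
  have xf: "P_feasible V E en SS b lam x" using opt unfolding P_optimal_def by auto
  have xnn: "\<forall>e\<in>E. 0 \<le> x e" and xsub: "\<forall>S. S \<noteq> {} \<and> S \<subset> V \<longrightarrow> sum x (Ein en E S) \<le> real (card S) - 1"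
    and xE: "sum x E = real (card V) - 1" and xdeg: "\<forall>S\<in>SS. sum x (dlt en E S) \<le> lam * real_of_int (b S)"
    using xf unfolding P_feasible_def frac_st_def by auto
  have ynn: "\<forall>e\<in>E. 0 \<le> y e" and ysub: "\<forall>S. S \<noteq> {} \<and> S \<subset> V \<longrightarrow> sum y (Ein en E S) \<le> real (card S) - 1"
    and yE: "sum y E = real (card V) - 1" and ydeg: "\<forall>S\<in>SS. sum y (dlt en E S) \<le> real_of_int (b S)"
    using y unfolding P_feasible_def frac_st_def by auto
  have finEin: "finite (Ein en E A)" for A using finE unfolding Ein_def by auto
  have findlt: "finite (dlt en E A)" for A using finE unfolding dlt_def by auto
  have ev1: "\<forall>\<^sub>F a in at_right 0. \<forall>e\<in>E. 0 \<le> p a e"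
  proof (rule eventually_ball_finite[OF finE], rule ballI)
    fix e assume e: "e \<in> E"
    have "\<forall>\<^sub>F a in at_right 0. - x e + a * (- d e) \<le> 0"
    proof (rule ev_lin)
      show "- x e \<le> 0" using xnn e by auto
      assume "- x e = 0"
      hence "e \<notin> T" using Tsupp by force
      hence "d e = k * y e" using \<open>- x e = 0\<close> unfolding d_def by simp
      thus "- d e \<le> 0" using k1 ynn e by simp
    qed
    thus "\<forall>\<^sub>F a in at_right 0. 0 \<le> p a e" by (rule eventually_mono) (simp add: p_def)
  qed
  define FA where "FA = {A. A \<subseteq> V \<and> A \<noteq> {} \<and> A \<subset> V}"
  have "FA \<subseteq> Pow V" unfolding FA_def by auto
  hence finFA: "finite FA" using finV finite_subset by blast
  have ev2: "\<forall>\<^sub>F a in at_right 0. \<forall>A\<in>FA. sum (p a) (Ein en E A) \<le> real (card A) - 1"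
  proof (rule eventually_ball_finite[OF finFA], rule ballI)
    fix A assume A: "A \<in> FA"
    have "\<forall>\<^sub>F a in at_right 0. sum x (Ein en E A) + a * sum d (Ein en E A) \<le> real (card A) - 1"
    proof (rule ev_lin)
      show "sum x (Ein en E A) \<le> real (card A) - 1" using xsub A unfolding FA_def by auto
      assume t: "sum x (Ein en E A) = real (card A) - 1"
      hence "A \<in> tight_sets V E en x" using A unfolding FA_def tight_sets_def by auto
      hence c: "real (card A) - 1 \<le> real (card (T \<inter> Ein en E A))" using tightT by blast
      have yA: "sum y (Ein en E A) \<le> real (card A) - 1" using ysub A unfolding FA_def by auto
      have "Ein en E A \<inter> T = T \<inter> Ein en E A" by blast
      hence "sum d (Ein en E A) = real (card A) - 1 - real (card (T \<inter> Ein en E A)) + k * (sum y (Ein en E A) - (real (card A) - 1))"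
        using sum_d[OF finEin, of A] t by simp
      also have "\<dots> \<le> 0"
      proof -
        have "k * (sum y (Ein en E A) - (real (card A) - 1)) \<le> 0"
          by (rule mult_nonneg_nonpos) (use k1 yA in auto)
        thus ?thesis using c by linarith
      qed
      finally show "sum d (Ein en E A) \<le> 0" .
    qed
    thus "\<forall>\<^sub>F a in at_right 0. sum (p a) (Ein en E A) \<le> real (card A) - 1"
      by (rule eventually_mono) (simp add: sum_p)
  qed
  have ev3: "\<forall>\<^sub>F a in at_right 0. \<forall>S\<in>SS. sum (p a) (dlt en E S) \<le> lam * real_of_int (b S)"
  proof (rule eventually_ball_finite[OF finSS], rule ballI)
    fix S assume S: "S \<in> SS"
    have "\<forall>\<^sub>F a in at_right 0. sum x (dlt en E S) + a * sum d (dlt en E S) \<le> lam * real_of_int (b S)"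
    proof (rule ev_lin)
      show "sum x (dlt en E S) \<le> lam * real_of_int (b S)" using xdeg S by auto
      assume t: "sum x (dlt en E S) = lam * real_of_int (b S)"
      have yS: "sum y (dlt en E S) \<le> real_of_int (b S)" using ydeg S by auto
      have "sum d (dlt en E S) = lam * real_of_int (b S) - real (card (dlt en E S \<inter> T)) + k * (sum y (dlt en E S) - lam * real_of_int (b S))"
        using sum_d[OF findlt, of S] t by simp
      also have "\<dots> \<le> lam * real_of_int (b S) + k * (real_of_int (b S) - lam * real_of_int (b S))"
      proof -
        have "k * (sum y (dlt en E S) - lam * real_of_int (b S)) \<le> k * (real_of_int (b S) - lam * real_of_int (b S))"
          by (rule mult_left_mono) (use k1 yS in auto)
        thus ?thesis by linarith
      qed
      also have "\<dots> = lam * real_of_int (b S) - k * (lam - 1) * real_of_int (b S)"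
        by (simp add: algebra_simps)
      also have "\<dots> = 0" using kl by simp
      finally show "sum d (dlt en E S) \<le> 0" .
    qed
    thus "\<forall>\<^sub>F a in at_right 0. sum (p a) (dlt en E S) \<le> lam * real_of_int (b S)"
      by (rule eventually_mono) (simp add: sum_p)
  qed
  have sdE: "sum d E = 0"
  proof -
    have "E \<inter> T = T" using TE by blast
    thus ?thesis using sum_d[OF finE] xE yE cardT by simp
  qed
  have ev4: "\<forall>\<^sub>F a in at_right (0::real). 0 < a" by (rule eventually_at_right_less)
  have "\<forall>\<^sub>F a in at_right (0::real). 0 < a \<and> (\<forall>e\<in>E. 0 \<le> p a e) \<and>
      (\<forall>A\<in>FA. sum (p a) (Ein en E A) \<le> real (card A) - 1) \<and>
      (\<forall>S\<in>SS. sum (p a) (dlt en E S) \<le> lam * real_of_int (b S))"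
    by (intro eventually_conj ev1 ev2 ev3 ev4)
  then obtain a where a: "0 < a" "\<forall>e\<in>E. 0 \<le> p a e"
      "\<forall>A\<in>FA. sum (p a) (Ein en E A) \<le> real (card A) - 1"
      "\<forall>S\<in>SS. sum (p a) (dlt en E S) \<le> lam * real_of_int (b S)"
    using eventually_happens'[OF trivial_limit_at_right_real] by blast
  have pf: "P_feasible V E en SS b lam (p a)"
    unfolding P_feasible_def frac_st_def
  proof (intro conjI)
    show "\<forall>e\<in>E. 0 \<le> p a e" by (rule a(2))
    show "\<forall>S. S \<noteq> {} \<and> S \<subset> V \<longrightarrow> sum (p a) (Ein en E S) \<le> real (card S) - 1"
      using a(3) unfolding FA_def by auto
    show "sum (p a) E = real (card V) - 1" using sum_p sdE xE by simp
    show "\<forall>S\<in>SS. sum (p a) (dlt en E S) \<le> lam * real_of_int (b S)" by (rule a(4))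
  qed
  have lpp: "lp_cost c E (p a) = lp_cost c E x + a * (\<Sum>e\<in>E. c e * d e)"
    unfolding lp_cost_def p_def by (simp add: algebra_simps sum.distrib sum_distrib_left)
  have cdT: "(\<Sum>e\<in>E. c e * (if e \<in> T then 1 else 0)) = sum c T"
  proof -
    have "(\<Sum>e\<in>E. c e * (if e \<in> T then 1 else 0)) = (\<Sum>e\<in>E. if e \<in> T then c e else 0)"
      by (rule sum.cong) auto
    also have "\<dots> = (\<Sum>e | e \<in> E \<and> e \<in> T. c e)" by (rule sum.inter_filter[OF finE, symmetric])
    also have "{e. e \<in> E \<and> e \<in> T} = T" using TE by blast
    finally show ?thesis .
  qed
  define chi where "chi e = (if e \<in> T then 1 else 0 :: real)" for e
  have pw: "c e * d e = (c e * x e - c e * chi e) + (k * (c e * y e) - k * (c e * x e))" for e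
    unfolding d_def chi_def by (simp add: algebra_simps)
  have "(\<Sum>e\<in>E. c e * d e) = (\<Sum>e\<in>E. (c e * x e - c e * chi e) + (k * (c e * y e) - k * (c e * x e)))"
    using pw by simp
  also have "\<dots> = (\<Sum>e\<in>E. c e * x e - c e * chi e) + (\<Sum>e\<in>E. k * (c e * y e) - k * (c e * x e))"
    by (rule sum.distrib)
  also have "\<dots> = ((\<Sum>e\<in>E. c e * x e) - (\<Sum>e\<in>E. c e * chi e)) + (k * (\<Sum>e\<in>E. c e * y e) - k * (\<Sum>e\<in>E. c e * x e))"
    by (simp only: sum_subtractf sum_distrib_left)
  finally have cd: "(\<Sum>e\<in>E. c e * d e) = lp_cost c E x - sum c T + (k * lp_cost c E y - k * lp_cost c E x)"
    using cdT unfolding lp_cost_def chi_def by simp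
  have lpx0: "lp_cost c E x \<ge> 0" unfolding lp_cost_def using cost xnn by (intro sum_nonneg) auto
  have "sum c T > k * lp_cost c E y" using contra unfolding k_def by simp
  moreover have "0 \<le> (k - 1) * lp_cost c E x" using k1 lpx0 by simp
  moreover have "(k - 1) * lp_cost c E x = k * lp_cost c E x - lp_cost c E x" by (simp add: algebra_simps)
  ultimately have "(\<Sum>e\<in>E. c e * d e) < 0" unfolding cd by linarith
  hence "lp_cost c E (p a) < lp_cost c E x" unfolding lpp using a(1)
    by (simp add: mult_pos_neg)
  moreover have "lp_cost c E x \<le> lp_cost c E (p a)" using opt pf unfolding P_optimal_def by blast
  ultimately show False by simp
qed



theorem theorem3:
  fixes V :: "'a set" and E :: "'e set" and en :: "'e \<Rightarrow> 'a set"
    and c :: "'e \<Rightarrow> real" and \<S> :: "'a set set" and b :: "'a set \<Rightarrow> int"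
    and lam :: real and xs x' :: "'e \<Rightarrow> real" and \<L> \<L>' :: "'a set set"
    and TL :: "'a set \<Rightarrow> 'e set" and T :: "'e set"
  assumes finV: "finite V" and finE: "finite E"
    and edges: "\<forall>e \<in> E. card (en e) = 2 \<and> en e \<subseteq> V"
    and conn: "connected_graph V en E"
    and cost: "\<forall>e \<in> E. 0 \<le> c e"
    and chain_proper: "\<forall>S \<in> \<S>. S \<subset> V"
    and chain: "\<forall>S \<in> \<S>. \<forall>S' \<in> \<S>. S \<subseteq> S' \<or> S' \<subseteq> S"
    and feas: "\<exists>x. P_feasible V E en \<S> b 1 x"
    and lam: "lam > 1"
    and step1_opt: "P_optimal V E en \<S> b c lam xs"
    and step1_lam: "laminar_decomp V E en xs \<L>"
    and step2_fst: "frac_st V E en x'"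
    and step2_rf: "rainbow_free V E en \<S> x' \<L>'"
    and step2_supp: "supp E x' \<subseteq> supp E xs"
    and step2_sub: "\<L> \<subseteq> \<L>'"
    and step2_cut: "\<forall>S \<in> \<S>. sum x' (dlt en E S) \<le> sum xs (dlt en E S)"
    and step3_TL: "\<forall>L \<in> \<L>'. TL L \<subseteq> supp E x' \<and>
        is_spanning_tree (contr_verts \<L>' L) (contr_edges E en \<L>' L) (contr_ends \<L>' L en) (TL L)"
    and step3_T: "T = (\<Union>L \<in> \<L>'. TL L)"
    and step3_st: "is_spanning_tree V E en T"
    and step3_deg: "\<forall>S \<in> \<S>. real (card (dlt en E S \<inter> T)) \<le> 9 * sum x' (dlt en E S)"
  shows "sum c T \<le> lam / (lam - 1) * OPT_lp V E en \<S> b c 1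
    \<and> (\<forall>S \<in> \<S>. real (card (dlt en E S \<inter> T)) \<le> 9 * lam * real_of_int (b S))"
proof -
  have TE: "T \<subseteq> E" and Tcon: "connected_graph V en T" and Tbr: "bridges en T"
    using step3_st unfolding is_spanning_tree_def bridges_def by auto
  have edT: "edges_in V en T" using TE edges unfolding edges_in_def by auto
  have finT: "finite T" using TE finE finite_subset by blast
  have Tsupp: "\<forall>e\<in>T. xs e > 0"
  proof
    fix e assume "e \<in> T"
    then obtain L where "L \<in> \<L>'" "e \<in> TL L" using step3_T by auto
    hence "e \<in> supp E x'" using step3_TL by auto
    hence "e \<in> supp E xs" using step2_supp by auto
    thus "xs e > 0" unfolding supp_def by auto
  qed
  have Vne: "V \<noteq> {}"
  proof
    assume "V = {}"
    hence "\<forall>e\<in>E. False" using edges by auto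
    hence "E = {}" by blast
    thus False using step2_fst \<open>V = {}\<close> unfolding frac_st_def by simp
  qed
  have cT: "card T + 1 = card V"
    using conn_card[OF finT finV edT Vne] forest_card[OF finT finV edT Vne Tbr] Tcon
    unfolding connected_graph_def by auto
  have forest: "\<forall>A. A \<noteq> {} \<longrightarrow> A \<subseteq> V \<longrightarrow> card (T \<inter> Ein en E A) + 1 \<le> card A"
  proof (intro allI impI)
    fix A assume A: "A \<noteq> {}" "A \<subseteq> V"
    have "finite A" using A finV finite_subset by blast
    moreover have "finite (T \<inter> Ein en E A)" using finT by auto
    moreover have "edges_in A en (T \<inter> Ein en E A)" using edges TE unfolding edges_in_def Ein_def by auto
    moreover have "bridges en (T \<inter> Ein en E A)" using bridges_mono[OF Tbr] by blast
    ultimately show "card (T \<inter> Ein en E A) + 1 \<le> card A" using forest_card A by blast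
  qed
  have lamL': "laminar \<L>'" and L'sub: "\<L>' \<subseteq> tight_sets V E en x'"
    using step2_rf unfolding rainbow_free_def laminar_decomp_def by auto
  have L'V: "\<forall>A\<in>\<L>'. A \<subseteq> V" using L'sub unfolding tight_sets_def by auto
  have TLc: "\<forall>L\<in>\<L>'. TL L \<subseteq> contr_edges E en \<L>' L \<and>
               connected_graph (contr_verts \<L>' L) (contr_ends \<L>' L en) (TL L)"
    using step3_TL unfolding is_spanning_tree_def by auto
  have TLT: "\<forall>L\<in>\<L>'. TL L \<subseteq> T" using step3_T by auto
  have edgesE: "\<forall>e\<in>E. card (en e) = 2" using edges by auto
  have base: "\<forall>L\<in>\<L>. card L \<le> card (T \<inter> Ein en E L) + 1"
  proof
    fix L assume "L \<in> \<L>"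
    hence L: "L \<in> \<L>'" using step2_sub by auto
    have cc: "\<forall>u\<in>L. \<forall>v\<in>L. (u, v) \<in> (adj en (T \<inter> Ein en E L))\<^sup>*"
      by (rule contr_conn[OF finV lamL' L'V TLc TLT edgesE L])
    have "L \<noteq> {}" "L \<subseteq> V" using L L'sub unfolding tight_sets_def by auto
    moreover have "finite L" using \<open>L \<subseteq> V\<close> finV finite_subset by blast
    moreover have "finite (T \<inter> Ein en E L)" using finT by auto
    moreover have "edges_in L en (T \<inter> Ein en E L)" using edges TE unfolding edges_in_def Ein_def by auto
    ultimately show "card L \<le> card (T \<inter> Ein en E L) + 1" using conn_card cc by blast
  qed
  have fstxs: "frac_st V E en xs" using step1_opt unfolding P_optimal_def P_feasible_def by auto
  have unc: "card S \<le> card (T \<inter> Ein en E S) + 1" if "S \<in> tight_sets V E en xs" for S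
    by (rule uncross[OF finV finE edges fstxs step1_lam Tsupp forest base that])
  have tightT: "\<forall>A. A \<in> tight_sets V E en xs \<longrightarrow> real (card A) - 1 \<le> real (card (T \<inter> Ein en E A))"
  proof (intro allI impI)
    fix A assume "A \<in> tight_sets V E en xs"
    from unc[OF this] have "real (card A) \<le> real (card (T \<inter> Ein en E A)) + 1" by linarith
    thus "real (card A) - 1 \<le> real (card (T \<inter> Ein en E A))" by linarith
  qed
  have finS: "finite \<S>"
  proof -
    have "\<S> \<subseteq> Pow V" using chain_proper by auto
    thus ?thesis using finV finite_subset by blast
  qed
  have cardT: "real (card T) = real (card V) - 1" using cT by linarith
  define k where "k = lam / (lam - 1)"
  have kpos: "k > 0" unfolding k_def using lam by simp
  have main: "sum c T / k \<le> z" if "z \<in> lp_cost c E ` {x. P_feasible V E en \<S> b 1 x}" for z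
  proof -
    from that obtain y where y: "P_feasible V E en \<S> b 1 y" "z = lp_cost c E y" by auto
    have "sum c T \<le> k * z"
      unfolding k_def y(2) by (rule lp_main[OF finV finE edges step1_opt y(1) lam cost finS TE Tsupp cardT tightT])
    thus ?thesis using kpos by (simp add: divide_le_eq mult.commute)
  qed
  have ne: "lp_cost c E ` {x. P_feasible V E en \<S> b 1 x} \<noteq> {}" using feas by auto
  have "sum c T / k \<le> OPT_lp V E en \<S> b c 1"
    unfolding OPT_lp_def by (rule cInf_greatest[OF ne main])
  hence part1: "sum c T \<le> lam / (lam - 1) * OPT_lp V E en \<S> b c 1"
    using kpos unfolding k_def[symmetric] by (simp add: divide_le_eq mult.commute)
  have part2: "\<forall>S \<in> \<S>. real (card (dlt en E S \<inter> T)) \<le> 9 * lam * real_of_int (b S)"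
  proof
    fix S assume S: "S \<in> \<S>"
    have "sum xs (dlt en E S) \<le> lam * real_of_int (b S)"
      using step1_opt S unfolding P_optimal_def P_feasible_def by auto
    thus "real (card (dlt en E S \<inter> T)) \<le> 9 * lam * real_of_int (b S)"
      using step3_deg step2_cut S by fastforce
  qed
  show ?thesis using part1 part2 by blast
qed


end
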